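(* Let $N\ge3$ and let ${\bf k}=(k_0,\dots,k_{r-1})$ with every $k_m\ge1$ and $\sum_m k_m=N$. For $0\le m\le r-1$ let ${\bf k}^{(m)}$ be obtained from ${\bf k}$ by replacing $k_m$ by $k_m-1$. Then $$\Delta_{N,{\bf k}}\ \ge\ \frac{N(N-2)}{(N-1)^2}\,\min\{\Delta_{N-1,{\bf k}^{(m)}}:\ 0\le m\le r-1\}.$$
   Context: Fix $r\ge2$, distinct reals $e_0,\dots,e_{r-1}$. For $M\ge2$ and ${\bf j}=(j_0,\dots,j_{r-1})$ nonnegative integers with $\sum_m j_m=M$, the multislice $\mathcal{V}_{M,{\bf j}}$ is the set of $x\in\{e_0,\dots,e_{r-1}\}^M$ with exactly $j_m$ coordinates equal to $e_m$ for each $m$; $\mu_{M,{\bf j}}$ is the uniform probability measure on it. For $i<j$, $\pi_{i,j}x$ swaps coordinates $i$ and $j$ of $x$. The Dirichlet form is $$\mathcal{D}_{M,{\bf j}}(f,f)=\frac{1}{M-1}\sum_{x\in\mathcal{V}_{M,{\bf j}}}\sum_{1\le i<j\le M}(f(\pi_{i,j}x)-f(x))^2\,\mu_{M,{\bf j}}(x),$$ and $\Delta_{M,{\bf j}}=\inf\{\mathcal{D}_{M,{\bf j}}(f,f):\ \|f\|_{L^2(\mu_{M,{\bf j}})}=1,\ \langle f,1\rangle_{L^2(\mu_{M,{\bf j}})}=0\}$, with the convention that the infimum over an empty set (when $\mathcal{V}_{M,{\bf j}}$ is a single point) is $+\infty$. *)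

theory Defs
  imports "HOL-Analysis.Analysis"
begin

definition multislice :: "(nat \<Rightarrow> real) \<Rightarrow> nat \<Rightarrow> nat \<Rightarrow> (nat \<Rightarrow> nat) \<Rightarrow> (nat \<Rightarrow> real) set" where
  "multislice e r M j =
     {x \<in> PiE {1..M} (\<lambda>_. e ` {..<r}). \<forall>m<r. card {i \<in> {1..M}. x i = e m} = j m}"

definition swap_coords :: "nat \<Rightarrow> nat \<Rightarrow> (nat \<Rightarrow> real) \<Rightarrow> (nat \<Rightarrow> real)" where
  "swap_coords i j x = x(i := x j, j := x i)"

definition mu :: "(nat \<Rightarrow> real) \<Rightarrow> nat \<Rightarrow> nat \<Rightarrow> (nat \<Rightarrow> nat) \<Rightarrow> (nat \<Rightarrow> real) \<Rightarrow> real" where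
  "mu e r M j x = (if x \<in> multislice e r M j then 1 / real (card (multislice e r M j)) else 0)"

definition L2_inner :: "(nat \<Rightarrow> real) \<Rightarrow> nat \<Rightarrow> nat \<Rightarrow> (nat \<Rightarrow> nat)
    \<Rightarrow> ((nat \<Rightarrow> real) \<Rightarrow> real) \<Rightarrow> ((nat \<Rightarrow> real) \<Rightarrow> real) \<Rightarrow> real" where
  "L2_inner e r M j f g = (\<Sum>x\<in>multislice e r M j. f x * g x * mu e r M j x)"

definition L2_norm_ms :: "(nat \<Rightarrow> real) \<Rightarrow> nat \<Rightarrow> nat \<Rightarrow> (nat \<Rightarrow> nat)
    \<Rightarrow> ((nat \<Rightarrow> real) \<Rightarrow> real) \<Rightarrow> real" where
  "L2_norm_ms e r M j f = sqrt (L2_inner e r M j f f)"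

definition dirichlet :: "(nat \<Rightarrow> real) \<Rightarrow> nat \<Rightarrow> nat \<Rightarrow> (nat \<Rightarrow> nat)
    \<Rightarrow> ((nat \<Rightarrow> real) \<Rightarrow> real) \<Rightarrow> real" where
  "dirichlet e r M j f =
     1 / (real M - 1) *
     (\<Sum>x\<in>multislice e r M j. \<Sum>(i, k)\<in>{(i, k). 1 \<le> i \<and> i < k \<and> k \<le> M}.
        (f (swap_coords i k x) - f x)\<^sup>2 * mu e r M j x)"

text \<open>Spectral gap, valued in the extended reals so that the infimum over the
  empty set is \<open>+\<infinity>\<close>.\<close>
definition gap :: "(nat \<Rightarrow> real) \<Rightarrow> nat \<Rightarrow> nat \<Rightarrow> (nat \<Rightarrow> nat) \<Rightarrow> ereal" where
  "gap e r M j = Inf (ereal ` {dirichlet e r M j f | f.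
      L2_norm_ms e r M j f = 1 \<and> L2_inner e r M j f (\<lambda>_. 1) = 0})"

end

theory Submission
  imports Defs
begin


definition tr :: "nat \<Rightarrow> nat \<Rightarrow> nat \<Rightarrow> nat" where
  "tr i j p = (if p = i then j else if p = j then i else p)"

lemma swap_coords_tr: "swap_coords i j x = (\<lambda>p. x (tr i j p))"
  by (auto simp: swap_coords_def tr_def fun_eq_iff)

lemma swap_swap[simp]: "swap_coords i j (swap_coords i j x) = x"
  by (auto simp: swap_coords_tr tr_def fun_eq_iff)

lemma swap_comm: "swap_coords i j = swap_coords j i"
  by (auto simp: swap_coords_tr tr_def fun_eq_iff)

lemma swap_conj:
  "swap_coords a b (swap_coords i j (swap_coords a b x)) = swap_coords (tr a b i) (tr a b j) x"
  by (auto simp: swap_coords_tr tr_def fun_eq_iff)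

lemma tr_in: "i \<in> A \<Longrightarrow> j \<in> A \<Longrightarrow> p \<in> A \<Longrightarrow> tr i j p \<in> A"
  by (auto simp: tr_def)

lemma tr_tr[simp]: "tr i j (tr i j p) = p"
  by (auto simp: tr_def)

lemma swap_val1[simp]: "swap_coords i j x j = x i"
  by (auto simp: swap_coords_def)

lemma swap_val_other[simp]: "p \<noteq> i \<Longrightarrow> p \<noteq> j \<Longrightarrow> swap_coords i j x p = x p"
  by (auto simp: swap_coords_def)

lemma finite_multislice: "finite (multislice e r M j)"
proof -
  have "finite (PiE {1..M} (\<lambda>_. e ` {..<r}))" by (intro finite_PiE) auto
  then show ?thesis unfolding multislice_def by (rule finite_subset[rotated]) auto
qed

lemma card_swap_level:
  assumes "i \<in> {1..M}" "l \<in> {1..M}"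
  shows "card {p \<in> {1..M}. swap_coords i l x p = v} = card {p \<in> {1..M}. x p = v}"
proof -
  have "{p \<in> {1..M}. swap_coords i l x p = v} = tr i l ` {p \<in> {1..M}. x p = v}"
  proof (rule set_eqI, rule iffI)
    fix p assume p: "p \<in> {p \<in> {1..M}. swap_coords i l x p = v}"
    then show "p \<in> tr i l ` {p \<in> {1..M}. x p = v}"
      using assms by (intro image_eqI[of _ _ "tr i l p"]) (auto simp: swap_coords_tr tr_def)
  next
    fix p assume "p \<in> tr i l ` {p \<in> {1..M}. x p = v}"
    then obtain q where q: "q \<in> {1..M}" "x q = v" "p = tr i l q" by auto
    then show "p \<in> {p \<in> {1..M}. swap_coords i l x p = v}"
      using assms by (auto simp: swap_coords_tr tr_def)
  qed
  moreover have "inj_on (tr i l) A" for A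
    by (rule inj_onI) (metis tr_tr)
  ultimately show ?thesis by (simp add: card_image)
qed

lemma multislice_swap:
  assumes "x \<in> multislice e r M j" "i \<in> {1..M}" "l \<in> {1..M}"
  shows "swap_coords i l x \<in> multislice e r M j"
proof -
  have x: "x \<in> PiE {1..M} (\<lambda>_. e ` {..<r})" "\<forall>m<r. card {p \<in> {1..M}. x p = e m} = j m"
    using assms(1) unfolding multislice_def by auto
  have "swap_coords i l x \<in> PiE {1..M} (\<lambda>_. e ` {..<r})"
    using x(1) assms(2,3) unfolding PiE_iff extensional_def swap_coords_tr tr_def by auto
  moreover have "\<forall>m<r. card {p \<in> {1..M}. swap_coords i l x p = e m} = j m"
    using x(2) card_swap_level[OF assms(2,3)] by simp
  ultimately show ?thesis unfolding multislice_def by simp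
qed

lemma bij_swap_multislice:
  assumes "i \<in> {1..M}" "l \<in> {1..M}"
  shows "bij_betw (swap_coords i l) (multislice e r M j) (multislice e r M j)"
  by (rule bij_betw_byWitness[where f'="swap_coords i l"]) (use assms multislice_swap in auto)

lemma sum_swap_invariant:
  assumes "i \<in> {1..M}" "l \<in> {1..M}"
  shows "(\<Sum>x\<in>multislice e r M j. F (swap_coords i l x)) = (\<Sum>x\<in>multislice e r M j. F x)"
  using sum.reindex_bij_betw[OF bij_swap_multislice[OF assms]] by simp



lemma L2_inner_eq:
  "L2_inner e r M j f g = (\<Sum>x\<in>multislice e r M j. f x * g x) / card (multislice e r M j)"
  unfolding L2_inner_def mu_def by (simp add: sum_divide_distrib)

abbreviation pairs :: "nat \<Rightarrow> (nat \<times> nat) set" where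
  "pairs M \<equiv> {(i, k). 1 \<le> i \<and> i < k \<and> k \<le> M}"

lemma finite_pairs: "finite (pairs M)"
  by (rule finite_subset[of _ "{1..M} \<times> {1..M}"]) auto

definition DS :: "(nat \<Rightarrow> real) \<Rightarrow> nat \<Rightarrow> nat \<Rightarrow> (nat \<Rightarrow> nat) \<Rightarrow> ((nat \<Rightarrow> real) \<Rightarrow> real) \<Rightarrow> real" where
  "DS e r M j f = (\<Sum>x\<in>multislice e r M j. \<Sum>(i, k)\<in>pairs M. (f (swap_coords i k x) - f x)\<^sup>2)"

lemma dirichlet_eq:
  "dirichlet e r M j f = DS e r M j f / ((real M - 1) * card (multislice e r M j))"
  unfolding dirichlet_def DS_def mu_def
  by (simp add: sum_divide_distrib sum_distrib_right case_prod_unfold ac_simps)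

lemma DS_nonneg: "DS e r M j f \<ge> 0"
  unfolding DS_def by (intro sum_nonneg) (auto simp: case_prod_unfold)

lemma dirichlet_nonneg: "M \<ge> 1 \<Longrightarrow> dirichlet e r M j f \<ge> 0"
  unfolding dirichlet_eq using DS_nonneg[of e r M j f] by (intro divide_nonneg_nonneg) auto

lemma gap_bound:
  assumes "M \<ge> 1" "lam \<ge> 0" "ereal lam \<le> gap e r M j"
  shows "lam * (L2_inner e r M j g g - (L2_inner e r M j g (\<lambda>_. 1))\<^sup>2) \<le> dirichlet e r M j g"
proof (cases "L2_inner e r M j g g - (L2_inner e r M j g (\<lambda>_. 1))\<^sup>2 \<le> 0")
  case True
  then show ?thesis using dirichlet_nonneg[OF assms(1)] assms(2)
    by (meson mult_nonneg_nonpos order_trans)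
next
  case False
  define V where "V = multislice e r M j"
  define n where "n = real (card V)"
  define A where "A = (\<Sum>x\<in>V. g x * g x)"
  define B where "B = (\<Sum>x\<in>V. g x)"
  define Var where "Var = L2_inner e r M j g g - (L2_inner e r M j g (\<lambda>_. 1))\<^sup>2"
  have Var: "Var > 0" using False Var_def by simp
  have fin: "finite V" unfolding V_def by (rule finite_multislice)
  have "V \<noteq> {}"
  proof
    assume "V = {}" then have "Var = 0" unfolding Var_def L2_inner_eq V_def[symmetric] by simp
    with Var show False by simp
  qed
  then have n: "n > 0" unfolding n_def using fin by (simp add: card_gt_0_iff)
  have VarAB: "Var = A / n - (B / n)\<^sup>2"
    unfolding Var_def L2_inner_eq V_def[symmetric] n_def[symmetric] A_def B_def by simp
  define c where "c = B / n"
  define s where "s = sqrt Var"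
  have s: "s > 0" "s\<^sup>2 = Var" using Var unfolding s_def by auto
  define f0 where "f0 = (\<lambda>x. (g x - c) / s)"
  have sq: "(\<Sum>x\<in>V. (g x - c)\<^sup>2) = A - 2 * c * B + n * c\<^sup>2"
    unfolding A_def B_def n_def
    by (simp add: power2_diff sum.distrib sum_subtractf sum_distrib_left sum_distrib_right
        algebra_simps power2_eq_square)
  have "L2_inner e r M j f0 f0 = (\<Sum>x\<in>V. (g x - c)\<^sup>2) / s\<^sup>2 / n"
    unfolding L2_inner_eq V_def[symmetric] n_def[symmetric] f0_def
    by (simp add: sum_divide_distrib power2_eq_square)
  also have "\<dots> = (A - 2 * c * B + n * c\<^sup>2) / Var / n" using sq s by simp
  also have "\<dots> = 1"
    using n Var unfolding VarAB c_def by (simp add: field_simps power2_eq_square)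
  finally have n1: "L2_norm_ms e r M j f0 = 1" unfolding L2_norm_ms_def by simp
  have "L2_inner e r M j f0 (\<lambda>_. 1) = ((\<Sum>x\<in>V. g x) - n * c) / s / n"
    unfolding L2_inner_eq V_def[symmetric] n_def[symmetric] f0_def
    by (simp add: sum_divide_distrib[symmetric] sum_subtractf n_def)
  also have "\<dots> = 0" using n unfolding c_def B_def by simp
  finally have m0: "L2_inner e r M j f0 (\<lambda>_. 1) = 0" .
  have "DS e r M j f0 = DS e r M j g / s\<^sup>2"
    unfolding DS_def f0_def
    by (simp add: sum_divide_distrib case_prod_unfold power_divide diff_divide_distrib[symmetric])
  then have D0: "dirichlet e r M j f0 = dirichlet e r M j g / Var"
    unfolding dirichlet_eq using s by simp
  have "gap e r M j \<le> ereal (dirichlet e r M j f0)"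
    unfolding gap_def using n1 m0 by (intro Inf_lower) blast
  with assms(3) have "ereal lam \<le> ereal (dirichlet e r M j g / Var)" using D0
    by (metis order_trans)
  then have "lam \<le> dirichlet e r M j g / Var" by simp
  then show ?thesis using Var unfolding Var_def[symmetric] by (simp add: field_simps mult.commute)
qed



lemma count_sum:
  assumes "finite B" "finite L"
  shows "(\<Sum>l\<in>L. card {x\<in>B. P x l}) = (\<Sum>x\<in>B. card {l\<in>L. P x l})"
proof -
  have "(\<Sum>l\<in>L. card {x\<in>B. P x l}) = (\<Sum>l\<in>L. \<Sum>x\<in>B. if P x l then 1 else 0)"
    using assms by (simp add: sum.If_cases Int_def conj_commute)
  also have "\<dots> = (\<Sum>x\<in>B. \<Sum>l\<in>L. if P x l then 1 else 0)" by (rule sum.swap)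
  also have "\<dots> = (\<Sum>x\<in>B. card {l\<in>L. P x l})"
    using assms by (simp add: sum.If_cases Int_def conj_commute)
  finally show ?thesis .
qed

lemma count_const:
  assumes "a \<in> L" "b \<in> L" "\<And>x p q. x \<in> B \<Longrightarrow> p \<in> L \<Longrightarrow> q \<in> L \<Longrightarrow> swap_coords p q x \<in> B"
  shows "card {x\<in>B. x a = v} = card {x\<in>B. x b = v}"
proof -
  have "bij_betw (swap_coords a b) {x\<in>B. x a = v} {x\<in>B. x b = v}"
    by (rule bij_betw_byWitness[where f'="swap_coords a b"])
       (use assms in \<open>auto simp: swap_coords_def\<close>)
  then show ?thesis by (rule bij_betw_same_card)
qed

locale setting =
  fixes e :: "nat \<Rightarrow> real" and r N :: nat and k :: "nat \<Rightarrow> nat"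
  assumes r2: "r \<ge> 2" and inj: "inj_on e {..<r}" and N3: "N \<ge> 3"
    and kpos: "\<forall>m<r. k m \<ge> 1" and ksum: "(\<Sum>m<r. k m) = N"
begin

abbreviation "V \<equiv> multislice e r N k"
abbreviation "n \<equiv> card V"
definition c :: "nat \<Rightarrow> nat" where "c m = card {x\<in>V. x N = e m}"

lemma finV: "finite V" by (rule finite_multislice)

lemma e_eq: "m < r \<Longrightarrow> m' < r \<Longrightarrow> e m = e m' \<longleftrightarrow> m = m'"
  using inj by (auto dest: inj_onD)

lemma memV: "x \<in> V \<Longrightarrow> l \<in> {1..N} \<Longrightarrow> \<exists>m<r. x l = e m"
  unfolding multislice_def by (auto simp: PiE_iff)

lemma cardV: "x \<in> V \<Longrightarrow> m < r \<Longrightarrow> card {l\<in>{1..N}. x l = e m} = k m"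
  unfolding multislice_def by auto

lemma swapV: "x \<in> V \<Longrightarrow> p \<in> {1..N} \<Longrightarrow> q \<in> {1..N} \<Longrightarrow> swap_coords p q x \<in> V"
  by (rule multislice_swap)

lemma c_any: "l \<in> {1..N} \<Longrightarrow> card {x\<in>V. x l = e m} = c m"
  unfolding c_def using N3 by (intro count_const[where L="{1..N}"]) (auto intro: swapV)

lemma Nc: assumes "m < r" shows "N * c m = n * k m"
proof -
  have "(\<Sum>l\<in>{1..N}. card {x\<in>V. x l = e m}) = (\<Sum>x\<in>V. card {l\<in>{1..N}. x l = e m})"
    by (rule count_sum) (auto simp: finV)
  also have "\<dots> = (\<Sum>x\<in>V. k m)" using assms by (intro sum.cong refl cardV) auto
  finally show ?thesis using c_any by simp
qed

lemma pair_count: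
  assumes l: "l \<in> {1..N}" "l' \<in> {1..N}" "l' \<noteq> l" and m: "m < r" "m' < r"
  shows "real (N - 1) * card {x\<in>V. x l = e m \<and> x l' = e m'}
       = real (c m) * (real (k m') - (if m = m' then 1 else 0))"
proof -
  define B where "B = {x\<in>V. x l = e m}"
  define L where "L = {1..N} - {l}"
  have finB: "finite B" unfolding B_def using finV by simp
  have swB: "swap_coords p q x \<in> B" if "x \<in> B" "p \<in> L" "q \<in> L" for x p q
    using that unfolding B_def L_def by (auto intro: swapV)
  have const: "card {x\<in>B. x q = e m'} = card {x\<in>B. x l' = e m'}" if "q \<in> L" for q
    using that l by (intro count_const[where a=q and b=l' and L=L and B=B, OF _ _ swB]) (auto simp: L_def)
  have cL: "card L = N - 1" unfolding L_def using l by simp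
  have "(\<Sum>q\<in>L. card {x\<in>B. x q = e m'}) = (\<Sum>x\<in>B. card {q\<in>L. x q = e m'})"
    by (rule count_sum) (auto simp: finB L_def)
  also have "\<dots> = (\<Sum>x\<in>B. k m' - (if m = m' then 1 else 0))"
  proof (intro sum.cong refl)
    fix x assume x: "x \<in> B"
    have "{q\<in>L. x q = e m'} = {q\<in>{1..N}. x q = e m'} - {l}" unfolding L_def by auto
    moreover have "l \<in> {q\<in>{1..N}. x q = e m'} \<longleftrightarrow> m = m'"
      using x l m e_eq unfolding B_def by auto
    ultimately show "card {q\<in>L. x q = e m'} = k m' - (if m = m' then 1 else 0)"
      using x cardV[of x m'] m unfolding B_def by (simp add: card_Diff_singleton_if)
  qed
  also have "\<dots> = card B * (k m' - (if m = m' then 1 else 0))" by simp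
  finally have "(N - 1) * card {x\<in>B. x l' = e m'} = card B * (k m' - (if m = m' then 1 else 0))"
    using const cL by simp
  moreover have "card B = c m" unfolding B_def using c_any l by simp
  moreover have "{x\<in>B. x l' = e m'} = {x\<in>V. x l = e m \<and> x l' = e m'}" unfolding B_def by auto
  moreover have "k m' \<ge> 1" using kpos m by auto
  ultimately have "real ((N - 1) * card {x\<in>V. x l = e m \<and> x l' = e m'}) = real (c m * (k m' - (if m = m' then 1 else 0)))"
    by simp
  then show ?thesis using \<open>k m' \<ge> 1\<close> using N3
    by (simp only: of_nat_mult of_nat_diff) (auto simp: of_nat_diff)
qed

end


lemma aux_mult: "(c::real) > 0 \<Longrightarrow> a \<le> R / (d * c) \<Longrightarrow> a * c \<le> R / d"
  using mult_right_mono[of a "R / (d * c)" c] by simp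

context setting begin

lemma partition_sum:
  assumes "l \<in> {1..N}"
  shows "(\<Sum>x\<in>V. F x) = (\<Sum>m<r. \<Sum>x\<in>{x\<in>V. x l = e m}. F x)"
proof -
  have V: "V = (\<Union>m\<in>{..<r}. {x\<in>V. x l = e m})" using memV[OF _ assms] by auto
  have "(\<Sum>x\<in>V. F x) = (\<Sum>x\<in>(\<Union>m\<in>{..<r}. {x\<in>V. x l = e m}). F x)" using V by simp
  also have "\<dots> = (\<Sum>m<r. \<Sum>x\<in>{x\<in>V. x l = e m}. F x)"
    by (rule sum.UNION_disjoint) (auto simp: finV e_eq)
  finally show ?thesis .
qed

abbreviation "V' m \<equiv> multislice e r (N - 1) (k(m := k m - 1))"

lemma ext_in:
  assumes m: "m < r" and y: "y \<in> V' m"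
  shows "y(N := e m) \<in> V"
proof -
  have y1: "y \<in> PiE {1..N-1} (\<lambda>_. e ` {..<r})"
    and y2: "\<forall>m'<r. card {i\<in>{1..N-1}. y i = e m'} = (k(m := k m - 1)) m'"
    using y unfolding multislice_def by auto
  have "y(N := e m) \<in> PiE {1..N} (\<lambda>_. e ` {..<r})"
    using y1 m N3 unfolding PiE_iff extensional_def by auto
  moreover have "card {i\<in>{1..N}. (y(N := e m)) i = e m'} = k m'" if m': "m' < r" for m'
  proof -
    have "{i\<in>{1..N}. (y(N := e m)) i = e m'} =
        {i\<in>{1..N-1}. y i = e m'} \<union> (if m' = m then {N} else {})"
      using N3 e_eq[OF m m'] by auto
    moreover have "N \<notin> {i\<in>{1..N-1}. y i = e m'}" by auto
    ultimately show ?thesis using y2 m' kpos m by (auto)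
  qed
  ultimately show ?thesis unfolding multislice_def by auto
qed

lemma res_in:
  assumes m: "m < r" and x: "x \<in> V" "x N = e m"
  shows "x(N := undefined) \<in> V' m"
proof -
  have x1: "x \<in> PiE {1..N} (\<lambda>_. e ` {..<r})"
    and x2: "\<forall>m'<r. card {i\<in>{1..N}. x i = e m'} = k m'"
    using x unfolding multislice_def by auto
  have "x(N := undefined) \<in> PiE {1..N-1} (\<lambda>_. e ` {..<r})"
    using x1 N3 unfolding PiE_iff extensional_def by auto
  moreover have "card {i\<in>{1..N-1}. (x(N := undefined)) i = e m'} = (k(m := k m - 1)) m'"
    if m': "m' < r" for m'
  proof -
    have "{i\<in>{1..N-1}. (x(N := undefined)) i = e m'} = {i\<in>{1..N}. x i = e m'} - {N}"
      using N3 by auto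
    moreover have "N \<in> {i\<in>{1..N}. x i = e m'} \<longleftrightarrow> m' = m" using x N3 e_eq[OF m m'] by auto
    ultimately show ?thesis using x2 m' by (auto simp: card_Diff_singleton_if)
  qed
  ultimately show ?thesis unfolding multislice_def by auto
qed

lemma ext_bij:
  assumes m: "m < r"
  shows "bij_betw (\<lambda>y. y(N := e m)) (V' m) {x\<in>V. x N = e m}"
proof (rule bij_betw_byWitness[where f'="\<lambda>x. x(N := undefined)"])
  show "\<forall>a\<in>V' m. (a(N := e m))(N := undefined) = a"
  proof
    fix a assume "a \<in> V' m"
    then have "a N = undefined" unfolding multislice_def using N3 by (auto simp: PiE_iff extensional_def)
    then show "(a(N := e m))(N := undefined) = a" by auto
  qed
qed (use ext_in res_in m in auto)

lemma card_V': "m < r \<Longrightarrow> card (V' m) = c m"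
  unfolding c_def by (rule bij_betw_same_card[OF ext_bij])

lemma swap_ext: "i < N \<Longrightarrow> j < N \<Longrightarrow> swap_coords i j (y(N := v)) = (swap_coords i j y)(N := v)"
  by (auto simp: swap_coords_def fun_eq_iff)

lemma stepA_m:
  assumes m: "m < r" and lam: "lam \<ge> 0" "ereal lam \<le> gap e r (N - 1) (k(m := k m - 1))"
    and cpos: "c m > 0"
  shows "lam * ((\<Sum>x\<in>{x\<in>V. x N = e m}. (g x)\<^sup>2) - (\<Sum>x\<in>{x\<in>V. x N = e m}. g x)\<^sup>2 / c m)
     \<le> (\<Sum>x\<in>{x\<in>V. x N = e m}. \<Sum>(i, j)\<in>pairs (N - 1). (g (swap_coords i j x) - g x)\<^sup>2) / (real N - 2)"
proof -
  define g' where "g' = (\<lambda>y. g (y(N := e m)))"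
  define A where "A = {x\<in>V. x N = e m}"
  have re: "(\<Sum>y\<in>V' m. F (y(N := e m))) = (\<Sum>x\<in>A. F x)" for F :: "_ \<Rightarrow> real"
    unfolding A_def using sum.reindex_bij_betw[OF ext_bij[OF m], of F] .
  have "lam * (L2_inner e r (N-1) (k(m := k m - 1)) g' g' - (L2_inner e r (N-1) (k(m := k m - 1)) g' (\<lambda>_. 1))\<^sup>2)
      \<le> dirichlet e r (N-1) (k(m := k m - 1)) g'"
    using N3 lam by (intro gap_bound) auto
  moreover have "L2_inner e r (N-1) (k(m := k m - 1)) g' g' = (\<Sum>x\<in>A. (g x)\<^sup>2) / c m"
    using re[of "\<lambda>x. (g x)\<^sup>2"] unfolding L2_inner_eq card_V'[OF m] g'_def by (simp add: power2_eq_square)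
  moreover have "L2_inner e r (N-1) (k(m := k m - 1)) g' (\<lambda>_. 1) = (\<Sum>x\<in>A. g x) / c m"
    using re[of g] unfolding L2_inner_eq card_V'[OF m] g'_def by simp
  moreover have "DS e r (N-1) (k(m := k m - 1)) g' = (\<Sum>x\<in>A. \<Sum>(i, j)\<in>pairs (N - 1). (g (swap_coords i j x) - g x)\<^sup>2)"
  proof -
    have "DS e r (N-1) (k(m := k m - 1)) g' = (\<Sum>y\<in>V' m. \<Sum>(i, j)\<in>pairs (N - 1). (g ((swap_coords i j y)(N := e m)) - g (y(N := e m)))\<^sup>2)"
      unfolding DS_def g'_def by simp
    also have "\<dots> = (\<Sum>y\<in>V' m. \<Sum>(i, j)\<in>pairs (N - 1). (g (swap_coords i j (y(N := e m))) - g (y(N := e m)))\<^sup>2)"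
      by (intro sum.cong refl) (auto simp: swap_ext)
    also have "\<dots> = (\<Sum>x\<in>A. \<Sum>(i, j)\<in>pairs (N - 1). (g (swap_coords i j x) - g x)\<^sup>2)"
      by (rule re)
    finally show ?thesis .
  qed
  ultimately have "lam * ((\<Sum>x\<in>A. (g x)\<^sup>2) / c m - ((\<Sum>x\<in>A. g x) / c m)\<^sup>2)
      \<le> (\<Sum>x\<in>A. \<Sum>(i, j)\<in>pairs (N - 1). (g (swap_coords i j x) - g x)\<^sup>2) / ((real (N - 1) - 1) * c m)"
    unfolding dirichlet_eq card_V'[OF m] by simp
  moreover have "real (N - 1) - 1 = real N - 2" using N3 by (simp add: of_nat_diff)
  ultimately have "lam * ((\<Sum>x\<in>A. (g x)\<^sup>2) / c m - ((\<Sum>x\<in>A. g x) / c m)\<^sup>2) * c m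
      \<le> (\<Sum>x\<in>A. \<Sum>(i, j)\<in>pairs (N - 1). (g (swap_coords i j x) - g x)\<^sup>2) / (real N - 2)"
    using aux_mult[of "real (c m)"] cpos by simp
  moreover have "lam * ((\<Sum>x\<in>A. (g x)\<^sup>2) / c m - ((\<Sum>x\<in>A. g x) / c m)\<^sup>2) * c m
     = lam * ((\<Sum>x\<in>A. (g x)\<^sup>2) - (\<Sum>x\<in>A. g x)\<^sup>2 / c m)"
    using cpos by (simp add: field_simps power2_eq_square)
  ultimately show ?thesis unfolding A_def by simp
qed

end


lemma pairs_reindex:
  assumes l: "l \<in> {1..N}" and G: "\<And>a b. G a b = G b a"
  shows "(\<Sum>(i, j)\<in>pairs (N - 1). G (tr l N i) (tr l N j)) =
         (\<Sum>p\<in>{p\<in>pairs N. fst p \<noteq> l \<and> snd p \<noteq> l}. G (fst p) (snd p))"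
proof (rule sum.reindex_bij_witness[where j="\<lambda>(i, j). (min (tr l N i) (tr l N j), max (tr l N i) (tr l N j))"
     and i="\<lambda>(i, j). (min (tr l N i) (tr l N j), max (tr l N i) (tr l N j))"])
  fix a assume "a \<in> pairs (N - 1)"
  then show "(case (case a of (i, j) \<Rightarrow> (min (tr l N i) (tr l N j), max (tr l N i) (tr l N j))) of
          (i, j) \<Rightarrow> (min (tr l N i) (tr l N j), max (tr l N i) (tr l N j))) = a"
    using l by (auto simp: tr_def min_def max_def split: if_splits)
next
  fix a assume "a \<in> pairs (N - 1)"
  then show "(case a of (i, j) \<Rightarrow> (min (tr l N i) (tr l N j), max (tr l N i) (tr l N j)))
         \<in> {p\<in>pairs N. fst p \<noteq> l \<and> snd p \<noteq> l}"
    using l by (auto simp: tr_def min_def max_def split: if_splits)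
next
  fix b assume "b \<in> {p\<in>pairs N. fst p \<noteq> l \<and> snd p \<noteq> l}"
  then show "(case (case b of (i, j) \<Rightarrow> (min (tr l N i) (tr l N j), max (tr l N i) (tr l N j))) of
          (i, j) \<Rightarrow> (min (tr l N i) (tr l N j), max (tr l N i) (tr l N j))) = b"
    using l by (auto simp: tr_def min_def max_def split: if_splits)
next
  fix b assume "b \<in> {p\<in>pairs N. fst p \<noteq> l \<and> snd p \<noteq> l}"
  then show "(case b of (i, j) \<Rightarrow> (min (tr l N i) (tr l N j), max (tr l N i) (tr l N j))) \<in> pairs (N - 1)"
    using l by (auto simp: tr_def min_def max_def split: if_splits)
next
  fix a assume "a \<in> pairs (N - 1)"
  then show "(\<lambda>p. G (fst p) (snd p)) (case a of (i, j) \<Rightarrow> (min (tr l N i) (tr l N j), max (tr l N i) (tr l N j))) =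
         (case a of (i, j) \<Rightarrow> G (tr l N i) (tr l N j))"
    using G by (auto simp: min_def max_def)
qed

lemma pairs_sum_l:
  assumes N: "N \<ge> 2"
  shows "(\<Sum>l\<in>{1..N}. \<Sum>p\<in>{p\<in>pairs N. fst p \<noteq> l \<and> snd p \<noteq> l}. (F p :: real)) =
         (real N - 2) * (\<Sum>p\<in>pairs N. F p)"
proof -
  have "(\<Sum>l\<in>{1..N}. \<Sum>p\<in>{p\<in>pairs N. fst p \<noteq> l \<and> snd p \<noteq> l}. F p) =
        (\<Sum>l\<in>{1..N}. \<Sum>p\<in>pairs N. if fst p \<noteq> l \<and> snd p \<noteq> l then F p else 0)"
    by (intro sum.cong refl sum.inter_filter finite_pairs)
  also have "\<dots> = (\<Sum>p\<in>pairs N. \<Sum>l\<in>{1..N}. if fst p \<noteq> l \<and> snd p \<noteq> l then F p else 0)"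
    by (rule sum.swap)
  also have "\<dots> = (\<Sum>p\<in>pairs N. (real N - 2) * F p)"
  proof (intro sum.cong refl)
    fix p assume p: "p \<in> pairs N"
    have "(\<Sum>l\<in>{1..N}. if fst p \<noteq> l \<and> snd p \<noteq> l then F p else 0) =
          (\<Sum>l\<in>{l\<in>{1..N}. fst p \<noteq> l \<and> snd p \<noteq> l}. F p)"
      by (subst sum.inter_filter) auto
    also have "{l\<in>{1..N}. fst p \<noteq> l \<and> snd p \<noteq> l} = {1..N} - {fst p, snd p}" by auto
    also have "card ({1..N} - {fst p, snd p}) = N - 2"
      using p by (subst card_Diff_subset) auto
    then have "(\<Sum>l\<in>{1..N} - {fst p, snd p}. F p) = real (N - 2) * F p" by simp
    finally show "(\<Sum>l\<in>{1..N}. if fst p \<noteq> l \<and> snd p \<noteq> l then F p else 0) = (real N - 2) * F p"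
      using N by (simp add: of_nat_diff)
  qed
  finally show ?thesis by (simp add: sum_distrib_left)
qed

context setting begin

lemma stepA:
  assumes n: "n > 0" and lam: "lam \<ge> 0" "\<forall>m<r. ereal lam \<le> gap e r (N - 1) (k(m := k m - 1))"
  shows "lam * ((\<Sum>x\<in>V. (g x)\<^sup>2) - (\<Sum>m<r. (\<Sum>x\<in>{x\<in>V. x N = e m}. g x)\<^sup>2 / c m))
     \<le> (\<Sum>x\<in>V. \<Sum>(i, j)\<in>pairs (N - 1). (g (swap_coords i j x) - g x)\<^sup>2) / (real N - 2)"
proof -
  have N: "N \<in> {1..N}" using N3 by auto
  have cpos: "c m > 0" if "m < r" for m
    using Nc[OF that] n kpos that N3 by (metis gr0I mult_is_0 not_one_le_zero)
  have "lam * ((\<Sum>x\<in>V. (g x)\<^sup>2) - (\<Sum>m<r. (\<Sum>x\<in>{x\<in>V. x N = e m}. g x)\<^sup>2 / c m))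
     = (\<Sum>m<r. lam * ((\<Sum>x\<in>{x\<in>V. x N = e m}. (g x)\<^sup>2) - (\<Sum>x\<in>{x\<in>V. x N = e m}. g x)\<^sup>2 / c m))"
    by (simp add: partition_sum[OF N, of "\<lambda>x. (g x)\<^sup>2"] sum_subtractf sum_distrib_left right_diff_distrib)
  also have "\<dots> \<le> (\<Sum>m<r. (\<Sum>x\<in>{x\<in>V. x N = e m}. \<Sum>(i, j)\<in>pairs (N - 1). (g (swap_coords i j x) - g x)\<^sup>2) / (real N - 2))"
    using lam cpos by (intro sum_mono stepA_m) auto
  also have "\<dots> = (\<Sum>x\<in>V. \<Sum>(i, j)\<in>pairs (N - 1). (g (swap_coords i j x) - g x)\<^sup>2) / (real N - 2)"
    by (simp add: partition_sum[OF N] sum_divide_distrib)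
  finally show ?thesis .
qed

definition Gf :: "((nat \<Rightarrow> real) \<Rightarrow> real) \<Rightarrow> nat \<Rightarrow> nat \<Rightarrow> real" where
  "Gf f a b = (\<Sum>y\<in>V. (f (swap_coords a b y) - f y)\<^sup>2)"

lemma Gf_sym: "Gf f a b = Gf f b a"
  unfolding Gf_def by (simp add: swap_comm)

lemma fl_term:
  assumes l: "l \<in> {1..N}"
  shows "(\<Sum>x\<in>V. \<Sum>(i, j)\<in>pairs (N - 1). (f (swap_coords l N (swap_coords i j x)) - f (swap_coords l N x))\<^sup>2)
    = (\<Sum>p\<in>{p\<in>pairs N. fst p \<noteq> l \<and> snd p \<noteq> l}. Gf f (fst p) (snd p))"
proof -
  have N: "N \<in> {1..N}" using N3 by auto
  have "(\<Sum>x\<in>V. \<Sum>(i, j)\<in>pairs (N - 1). (f (swap_coords l N (swap_coords i j x)) - f (swap_coords l N x))\<^sup>2)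
     = (\<Sum>(i, j)\<in>pairs (N - 1). \<Sum>x\<in>V. (f (swap_coords l N (swap_coords i j x)) - f (swap_coords l N x))\<^sup>2)"
    by (subst sum.swap) (simp add: case_prod_unfold)
  also have "\<dots> = (\<Sum>(i, j)\<in>pairs (N - 1). Gf f (tr l N i) (tr l N j))"
  proof (intro sum.cong refl, clarify)
    fix i j
    have "(\<Sum>x\<in>V. (f (swap_coords l N (swap_coords i j x)) - f (swap_coords l N x))\<^sup>2)
        = (\<Sum>x\<in>V. (\<lambda>y. (f (swap_coords l N (swap_coords i j (swap_coords l N y))) - f y)\<^sup>2) (swap_coords l N x))"
      by simp
    also have "\<dots> = (\<Sum>y\<in>V. (f (swap_coords l N (swap_coords i j (swap_coords l N y))) - f y)\<^sup>2)"
      by (rule sum_swap_invariant[OF l N])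
    also have "\<dots> = Gf f (tr l N i) (tr l N j)" unfolding Gf_def swap_conj ..
    finally show "(\<Sum>x\<in>V. (f (swap_coords l N (swap_coords i j x)) - f (swap_coords l N x))\<^sup>2) = Gf f (tr l N i) (tr l N j)" .
  qed
  also have "\<dots> = (\<Sum>p\<in>{p\<in>pairs N. fst p \<noteq> l \<and> snd p \<noteq> l}. Gf f (fst p) (snd p))"
    by (rule pairs_reindex[OF l Gf_sym])
  finally show ?thesis .
qed

lemma DS_Gf: "DS e r N k f = (\<Sum>p\<in>pairs N. Gf f (fst p) (snd p))"
  unfolding DS_def Gf_def by (subst sum.swap) (simp add: case_prod_unfold)

end


context setting begin

lemma swap_bij_level:
  assumes "a \<in> {1..N}" "b \<in> {1..N}"
  shows "bij_betw (swap_coords a b) {x\<in>V. x b = v} {x\<in>V. x a = v}"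
  by (rule bij_betw_byWitness[where f'="swap_coords a b"])
     (use assms swapV[unfolded swap_coords_def] in \<open>auto simp: swap_coords_def\<close>)

definition Sl :: "((nat \<Rightarrow> real) \<Rightarrow> real) \<Rightarrow> nat \<Rightarrow> nat \<Rightarrow> real" where
  "Sl f l m = (\<Sum>x\<in>{x\<in>V. x l = e m}. f x)"

definition TT :: "((nat \<Rightarrow> real) \<Rightarrow> real) \<Rightarrow> real" where
  "TT f = (\<Sum>l\<in>{1..N}. \<Sum>m<r. (Sl f l m)\<^sup>2 / c m)"

lemma stepA_total:
  assumes n: "n > 0" and lam: "lam \<ge> 0" "\<forall>m<r. ereal lam \<le> gap e r (N - 1) (k(m := k m - 1))"
  shows "lam * (real N * (\<Sum>x\<in>V. (f x)\<^sup>2) - TT f) \<le> DS e r N k f"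
proof -
  have N: "N \<in> {1..N}" using N3 by auto
  define g where "g l = (\<lambda>x. f (swap_coords l N x))" for l
  have sq: "(\<Sum>x\<in>V. (g l x)\<^sup>2) = (\<Sum>x\<in>V. (f x)\<^sup>2)" if "l \<in> {1..N}" for l
    unfolding g_def using sum_swap_invariant[OF that N, of "\<lambda>x. (f x)\<^sup>2"] .
  have S: "(\<Sum>x\<in>{x\<in>V. x N = e m}. g l x) = Sl f l m" if "l \<in> {1..N}" for l m
    unfolding g_def Sl_def using sum.reindex_bij_betw[OF swap_bij_level[OF that N], of f] by simp
  have "lam * (real N * (\<Sum>x\<in>V. (f x)\<^sup>2) - TT f)
      = (\<Sum>l\<in>{1..N}. lam * ((\<Sum>x\<in>V. (g l x)\<^sup>2) - (\<Sum>m<r. (\<Sum>x\<in>{x\<in>V. x N = e m}. g l x)\<^sup>2 / c m)))"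
    unfolding TT_def by (simp add: sq S sum_subtractf sum_distrib_left right_diff_distrib mult.left_commute)
  also have "\<dots> \<le> (\<Sum>l\<in>{1..N}. (\<Sum>x\<in>V. \<Sum>(i, j)\<in>pairs (N - 1). (g l (swap_coords i j x) - g l x)\<^sup>2) / (real N - 2))"
    by (intro sum_mono stepA[OF n lam])
  also have "\<dots> = (\<Sum>l\<in>{1..N}. (\<Sum>p\<in>{p\<in>pairs N. fst p \<noteq> l \<and> snd p \<noteq> l}. Gf f (fst p) (snd p)) / (real N - 2))"
    unfolding g_def by (intro sum.cong refl arg_cong[where f="\<lambda>x. x / (real N - 2)"] fl_term) auto
  also have "\<dots> = DS e r N k f"
    using N3 pairs_sum_l[of N "\<lambda>p. Gf f (fst p) (snd p)"] unfolding DS_Gf by (simp add: sum_divide_distrib[symmetric])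
  finally show ?thesis .
qed

end


context setting begin

definition aa :: "((nat \<Rightarrow> real) \<Rightarrow> real) \<Rightarrow> nat \<Rightarrow> nat \<Rightarrow> real" where
  "aa f l m = Sl f l m / c m"

definition hh :: "((nat \<Rightarrow> real) \<Rightarrow> real) \<Rightarrow> (nat \<Rightarrow> real) \<Rightarrow> real" where
  "hh f x = (\<Sum>l\<in>{1..N}. \<Sum>m<r. aa f l m * (if x l = e m then 1 else 0))"

definition alpha :: "((nat \<Rightarrow> real) \<Rightarrow> real) \<Rightarrow> nat \<Rightarrow> real" where
  "alpha f m = (\<Sum>l\<in>{1..N}. aa f l m)"

lemma cpos: "n > 0 \<Longrightarrow> m < r \<Longrightarrow> c m > 0"
  using Nc[of m] kpos N3 by (metis gr0I mult_is_0 not_one_le_zero)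

lemma ind_sum: "(\<Sum>x\<in>B. F x * (if P x then 1 else 0)) = (\<Sum>x\<in>{x\<in>B. P x}. (F x :: real))"
  if "finite B" for B
  using that by (simp add: sum.inter_filter if_distrib cong: if_cong)

lemma B0:
  assumes n: "n > 0" and f0: "(\<Sum>x\<in>V. f x) = 0" and l: "l \<in> {1..N}"
  shows "(\<Sum>m<r. aa f l m * k m) = 0"
proof -
  have "aa f l m * k m = Sl f l m * (real N / n)" if "m < r" for m
  proof -
    have "real N * c m = n * k m" using Nc[OF that] by (metis of_nat_mult)
    then show ?thesis unfolding aa_def using cpos[OF n that] n by (simp add: field_simps)
  qed
  then have "(\<Sum>m<r. aa f l m * k m) = (\<Sum>m<r. Sl f l m) * (real N / n)"
    by (simp add: sum_distrib_right sum_divide_distrib)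
  also have "(\<Sum>m<r. Sl f l m) = 0" unfolding Sl_def using partition_sum[OF l, of f] f0 by simp
  finally show ?thesis by simp
qed

lemma B1:
  assumes n: "n > 0"
  shows "(\<Sum>x\<in>V. f x * hh f x) = TT f"
proof -
  have "(\<Sum>x\<in>V. f x * hh f x) = (\<Sum>l\<in>{1..N}. \<Sum>m<r. aa f l m * (\<Sum>x\<in>V. f x * (if x l = e m then 1 else 0)))"
    unfolding hh_def
    by (simp add: sum_distrib_left sum_distrib_right mult.assoc mult.left_commute sum.swap[of _ _ V])
  also have "\<dots> = (\<Sum>l\<in>{1..N}. \<Sum>m<r. aa f l m * Sl f l m)"
    unfolding Sl_def by (simp add: ind_sum finV)
  also have "\<dots> = TT f"
    unfolding TT_def aa_def by (simp add: power2_eq_square)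
  finally show ?thesis .
qed

lemma B2:
  assumes n: "n > 0" and f0: "(\<Sum>x\<in>V. f x) = 0" and l: "l \<in> {1..N}" and m: "m < r"
  shows "(\<Sum>x\<in>{x\<in>V. x l = e m}. hh f x)
     = real N / (real N - 1) * c m * aa f l m - c m / (real N - 1) * alpha f m"
proof -
  define B where "B = {x\<in>V. x l = e m}"
  define L where "L = {1..N} - {l}"
  have finB: "finite B" unfolding B_def using finV by simp
  have N1: "real N - 1 > 0" using N3 by simp
  have rN1: "real (N - 1) = real N - 1" using N3 by (simp add: of_nat_diff)
  have card_ind: "(\<Sum>x\<in>B. (if x l' = e m' then 1 else 0)) = real (card {x\<in>B. x l' = e m'})" for l' m'
    using finB by (simp add: sum.If_cases Int_def conj_commute)
  have "(\<Sum>x\<in>B. hh f x) = (\<Sum>l'\<in>{1..N}. \<Sum>m'<r. aa f l' m' * card {x\<in>B. x l' = e m'})"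
    unfolding hh_def
    by (simp add: sum.swap[of _ _ B] sum_distrib_left[symmetric] card_ind)
  also have "\<dots> = (\<Sum>m'<r. aa f l m' * card {x\<in>B. x l = e m'})
      + (\<Sum>l'\<in>L. \<Sum>m'<r. aa f l' m' * card {x\<in>B. x l' = e m'})"
    unfolding L_def using l by (simp add: sum.remove)
  also have "(\<Sum>m'<r. aa f l m' * card {x\<in>B. x l = e m'}) = aa f l m * c m"
  proof -
    have "card {x\<in>B. x l = e m'} = (if m' = m then c m else 0)" if "m' < r" for m'
    proof (cases "m' = m")
      case True then show ?thesis unfolding B_def using c_any[OF l] by simp
    next
      case False
      then have "{x\<in>B. x l = e m'} = {}" unfolding B_def using e_eq[OF m that] by auto
      then show ?thesis using False by (metis card.empty)
    qed
    then have "(\<Sum>m'<r. aa f l m' * card {x\<in>B. x l = e m'}) = (\<Sum>m'<r. if m' = m then aa f l m * c m else 0)"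
      by (intro sum.cong refl) auto
    also have "\<dots> = aa f l m * c m" using m by simp
    finally show ?thesis .
  qed
  also have "(\<Sum>l'\<in>L. \<Sum>m'<r. aa f l' m' * card {x\<in>B. x l' = e m'})
      = (\<Sum>l'\<in>L. c m / (real N - 1) * ((\<Sum>m'<r. aa f l' m' * k m') - aa f l' m))"
  proof (intro sum.cong refl)
    fix l' assume l': "l' \<in> L"
    have "card {x\<in>B. x l' = e m'} = c m * (real (k m') - (if m = m' then 1 else 0)) / (real N - 1)"
      if "m' < r" for m'
    proof -
      have "{x\<in>B. x l' = e m'} = {x\<in>V. x l = e m \<and> x l' = e m'}" unfolding B_def by auto
      moreover have "l' \<in> {1..N}" "l' \<noteq> l" using l' unfolding L_def by auto
      ultimately show ?thesis using pair_count[OF l _ _ m that, of l'] N1 rN1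
        by (simp add: field_simps)
    qed
    then have "(\<Sum>m'<r. aa f l' m' * card {x\<in>B. x l' = e m'})
        = (\<Sum>m'<r. c m / (real N - 1) * (aa f l' m' * k m' - (if m' = m then aa f l' m else 0)))"
      by (intro sum.cong refl) (auto simp: field_simps)
    also have "\<dots> = c m / (real N - 1) * ((\<Sum>m'<r. aa f l' m' * k m') - aa f l' m)"
    proof -
      have d: "(\<Sum>m'<r. (if m' = m then aa f l' m else 0)) = aa f l' m" using m by simp
      show ?thesis unfolding sum_distrib_left[symmetric] sum_subtractf d ..
    qed
    finally show "(\<Sum>m'<r. aa f l' m' * card {x\<in>B. x l' = e m'})
        = c m / (real N - 1) * ((\<Sum>m'<r. aa f l' m' * k m') - aa f l' m)" .
  qed
  also have "\<dots> = - c m / (real N - 1) * (\<Sum>l'\<in>L. aa f l' m)"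
    using B0[OF n f0] unfolding L_def by (simp add: sum_distrib_left)
  also have "(\<Sum>l'\<in>L. aa f l' m) = alpha f m - aa f l m"
    unfolding alpha_def L_def using l by (simp add: sum.remove)
  finally have "(\<Sum>x\<in>B. hh f x) = aa f l m * c m + - c m / (real N - 1) * (alpha f m - aa f l m)" .
  also have "\<dots> = real N / (real N - 1) * c m * aa f l m - c m / (real N - 1) * alpha f m"
  proof -
    have alg: "d \<noteq> 0 \<Longrightarrow> a * cc + - cc / d * (al - a) = (d + 1) / d * cc * a - cc / d * al" for d a cc al :: real
      by (simp add: field_simps)
    show ?thesis using alg[of "real N - 1" "aa f l m" "real (c m)" "alpha f m"] N1 by simp
  qed
  finally show ?thesis unfolding B_def .
qed

lemma B3:
  assumes n: "n > 0" and f0: "(\<Sum>x\<in>V. f x) = 0"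
  shows "(\<Sum>x\<in>V. (hh f x)\<^sup>2) \<le> real N / (real N - 1) * TT f"
proof -
  have N1: "real N - 1 > 0" using N3 by simp
  have "(\<Sum>x\<in>V. (hh f x)\<^sup>2) = (\<Sum>x\<in>V. hh f x * hh f x)" by (simp add: power2_eq_square)
  also have "\<dots> = (\<Sum>l\<in>{1..N}. \<Sum>m<r. aa f l m * (\<Sum>x\<in>V. hh f x * (if x l = e m then 1 else 0)))"
    unfolding hh_def[of f] 
    by (simp add: sum_distrib_left sum_distrib_right mult.assoc mult.left_commute sum.swap[of _ _ V])
  also have "\<dots> = (\<Sum>l\<in>{1..N}. \<Sum>m<r. aa f l m * (\<Sum>x\<in>{x\<in>V. x l = e m}. hh f x))"
    by (simp add: ind_sum finV)
  also have "\<dots> = (\<Sum>l\<in>{1..N}. \<Sum>m<r. real N / (real N - 1) * (c m * (aa f l m)\<^sup>2)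
        - 1 / (real N - 1) * (c m * alpha f m * aa f l m))"
    by (intro sum.cong refl) (simp add: B2[OF n f0] field_simps power2_eq_square)
  also have "\<dots> = real N / (real N - 1) * (\<Sum>l\<in>{1..N}. \<Sum>m<r. c m * (aa f l m)\<^sup>2)
        - 1 / (real N - 1) * (\<Sum>m<r. c m * alpha f m * alpha f m)"
  proof -
    have sw: "(\<Sum>l\<in>{1..N}. \<Sum>m<r. c m * alpha f m * aa f l m) = (\<Sum>m<r. c m * alpha f m * alpha f m)"
    proof -
      have "(\<Sum>l\<in>{1..N}. \<Sum>m<r. c m * alpha f m * aa f l m) = (\<Sum>m<r. \<Sum>l\<in>{1..N}. c m * alpha f m * aa f l m)"
        by (rule sum.swap)
      also have "\<dots> = (\<Sum>m<r. c m * alpha f m * (\<Sum>l\<in>{1..N}. aa f l m))" by (simp add: sum_distrib_left)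
      finally show ?thesis by (simp add: alpha_def)
    qed
    have "(\<Sum>l\<in>{1..N}. \<Sum>m<r. real N / (real N - 1) * (c m * (aa f l m)\<^sup>2)
        - 1 / (real N - 1) * (c m * alpha f m * aa f l m))
       = real N / (real N - 1) * (\<Sum>l\<in>{1..N}. \<Sum>m<r. c m * (aa f l m)\<^sup>2)
        - 1 / (real N - 1) * (\<Sum>l\<in>{1..N}. \<Sum>m<r. c m * alpha f m * aa f l m)"
      by (simp only: sum_subtractf sum_distrib_left)
    then show ?thesis by (simp only: sw)
  qed
  also have "(\<Sum>l\<in>{1..N}. \<Sum>m<r. c m * (aa f l m)\<^sup>2) = TT f"
    unfolding TT_def aa_def using cpos[OF n] by (intro sum.cong refl) (simp add: power_divide power2_eq_square)
  finally have eq: "(\<Sum>x\<in>V. (hh f x)\<^sup>2) = real N / (real N - 1) * TT f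
        - 1 / (real N - 1) * (\<Sum>m<r. c m * alpha f m * alpha f m)" .
  have "(\<Sum>m<r. c m * alpha f m * alpha f m) \<ge> 0"
    by (intro sum_nonneg) (simp add: mult.assoc)
  then show ?thesis unfolding eq using N1 by simp
qed

lemma B4:
  assumes n: "n > 0" and f0: "(\<Sum>x\<in>V. f x) = 0"
  shows "TT f \<le> real N / (real N - 1) * (\<Sum>x\<in>V. (f x)\<^sup>2)"
proof -
  have N1: "real N - 1 > 0" using N3 by simp
  define t where "t = (real N - 1) / real N"
  have t: "t > 0" "t * t * (real N / (real N - 1)) = t" using N1 N3 unfolding t_def by (auto simp: field_simps)
  have "0 \<le> (\<Sum>x\<in>V. (f x - t * hh f x)\<^sup>2)" by (intro sum_nonneg) auto
  also have "\<dots> = (\<Sum>x\<in>V. (f x)\<^sup>2) - 2 * t * (\<Sum>x\<in>V. f x * hh f x) + t * t * (\<Sum>x\<in>V. (hh f x)\<^sup>2)"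
  proof -
    have "(\<Sum>x\<in>V. (f x - t * hh f x)\<^sup>2) = (\<Sum>x\<in>V. (f x)\<^sup>2 - 2 * t * (f x * hh f x) + t * t * (hh f x)\<^sup>2)"
      by (intro sum.cong refl) (simp add: power2_eq_square algebra_simps)
    then show ?thesis by (simp add: sum.distrib sum_subtractf sum_distrib_left)
  qed
  also have "\<dots> \<le> (\<Sum>x\<in>V. (f x)\<^sup>2) - 2 * t * TT f + t * t * (real N / (real N - 1) * TT f)"
    unfolding B1[OF n] using B3[OF n f0] t by (intro add_left_mono mult_left_mono) auto
  also have "\<dots> = (\<Sum>x\<in>V. (f x)\<^sup>2) - t * TT f"
  proof -
    have "t * t * (real N / (real N - 1) * TT f) = t * TT f" using t(2) by (metis mult.assoc)
    then show ?thesis by simp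
  qed
  finally have "t * TT f \<le> (\<Sum>x\<in>V. (f x)\<^sup>2)" by simp
  then show ?thesis using t N1 N3 unfolding t_def by (simp add: field_simps)
qed

end


context setting begin

lemma main_real:
  assumes nf: "L2_norm_ms e r N k f = 1" and mf: "L2_inner e r N k f (\<lambda>_. 1) = 0"
    and lam: "lam \<ge> 0" "\<forall>m<r. ereal lam \<le> gap e r (N - 1) (k(m := k m - 1))"
  shows "lam * (real N * (real N - 2) / (real N - 1)\<^sup>2) \<le> dirichlet e r N k f"
proof -
  have ff: "L2_inner e r N k f f = 1" using nf unfolding L2_norm_ms_def by simp
  have n: "n > 0"
  proof (rule ccontr)
    assume "\<not> n > 0" then have "n = 0" by simp
    then show False using ff unfolding L2_inner_eq by simp
  qed
  have sq: "(\<Sum>x\<in>V. (f x)\<^sup>2) = n" using ff n unfolding L2_inner_eq by (simp add: power2_eq_square field_simps)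
  have f0: "(\<Sum>x\<in>V. f x) = 0" using mf n unfolding L2_inner_eq by simp
  have N1: "real N - 1 > 0" "real N - 2 > 0" using N3 by auto
  have A: "lam * (real N * n - TT f) \<le> DS e r N k f" using stepA_total[OF n lam, of f] sq by simp
  have B: "TT f \<le> real N / (real N - 1) * n" using B4[OF n f0] sq by simp
  have "lam * (real N * n - real N / (real N - 1) * n) \<le> lam * (real N * n - TT f)"
    using B lam by (intro mult_left_mono) auto
  with A have C: "lam * (real N * n - real N / (real N - 1) * n) \<le> DS e r N k f" by linarith
  have "lam * (real N * (real N - 2) / (real N - 1)\<^sup>2) = lam * (real N * n - real N / (real N - 1) * n) / ((real N - 1) * n)"
  proof -
    have X: "real N * n - real N / (real N - 1) * n = n * (real N * (real N - 2) / (real N - 1))"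
      using N1 by (simp add: field_simps)
    have "lam * (n * (real N * (real N - 2) / (real N - 1))) / ((real N - 1) * n)
        = lam * (real N * (real N - 2) / (real N - 1)) / (real N - 1)" using n by simp
    also have "\<dots> = lam * (real N * (real N - 2) / (real N - 1)\<^sup>2)"
      using N1 by (simp add: power2_eq_square)
    finally show ?thesis unfolding X ..
  qed
  also have "\<dots> \<le> DS e r N k f / ((real N - 1) * n)"
    using C N1 n by (intro divide_right_mono) auto
  also have "\<dots> = dirichlet e r N k f" unfolding dirichlet_eq ..
  finally show ?thesis .
qed

lemma gap_nonneg: assumes "M \<ge> 1" shows "gap e r M j \<ge> 0"
  unfolding gap_def by (rule Inf_greatest) (use dirichlet_nonneg[OF assms] in auto)

end

theorem theorem3p1:
  fixes e :: "nat \<Rightarrow> real" and r N :: nat and k :: "nat \<Rightarrow> nat"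
  assumes "r \<ge> 2"
    and "inj_on e {..<r}"
    and "N \<ge> 3"
    and "\<forall>m<r. k m \<ge> 1"
    and "(\<Sum>m<r. k m) = N"
  shows "gap e r N k \<ge>
    ereal (real N * (real N - 2) / (real N - 1)\<^sup>2) *
    Min ((\<lambda>m. gap e r (N - 1) (k(m := k m - 1))) ` {..<r})"
proof -
  interpret setting e r N k using assms by unfold_locales auto
  define G where "G = Min ((\<lambda>m. gap e r (N - 1) (k(m := k m - 1))) ` {..<r})"
  define c0 where "c0 = real N * (real N - 2) / (real N - 1)\<^sup>2"
  have c0: "c0 > 0" unfolding c0_def using assms(3) by (auto intro!: divide_pos_pos mult_pos_pos)
  have "0 \<in> {..<r}" using assms(1) by simp
  then have ne: "(\<lambda>m. gap e r (N - 1) (k(m := k m - 1))) ` {..<r} \<noteq> {}" by blast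
  have Gle: "G \<le> gap e r (N - 1) (k(m := k m - 1))" if "m < r" for m
    unfolding G_def using that by (intro Min_le) auto
  have G0: "G \<ge> 0" unfolding G_def using ne assms(3)
    by (subst Min_ge_iff) (auto intro!: gap_nonneg)
  have key: "ereal c0 * G \<le> ereal (dirichlet e r N k f)"
    if nf: "L2_norm_ms e r N k f = 1" and mf: "L2_inner e r N k f (\<lambda>_. 1) = 0" for f
  proof (cases G)
    case (real g)
    have "g \<ge> 0" using G0 real by simp
    moreover have "\<forall>m<r. ereal g \<le> gap e r (N - 1) (k(m := k m - 1))" using Gle real by metis
    ultimately have "g * c0 \<le> dirichlet e r N k f" using main_real[OF nf mf] unfolding c0_def by blast
    then show ?thesis using real by (simp add: mult.commute)
  next
    case PInf
    define lam where "lam = dirichlet e r N k f / c0 + 1"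
    have "dirichlet e r N k f \<ge> 0" using assms(3) by (intro dirichlet_nonneg) auto
    then have lam0: "lam \<ge> 0" unfolding lam_def using c0 by simp
    have "\<forall>m<r. ereal lam \<le> gap e r (N - 1) (k(m := k m - 1))" using Gle PInf
      by (metis order_trans ereal_less_eq(1))
    then have "lam * c0 \<le> dirichlet e r N k f" using main_real[OF nf mf lam0] unfolding c0_def by blast
    moreover have "lam * c0 = dirichlet e r N k f + c0" unfolding lam_def using c0 by (simp add: field_simps)
    ultimately have False using c0 by linarith
    then show ?thesis ..
  next
    case MInf
    then show ?thesis using G0 by simp
  qed
  have "ereal c0 * G \<le> gap e r N k"
    unfolding gap_def[of e r N k]
  proof (rule Inf_greatest)
    fix y assume "y \<in> ereal ` {dirichlet e r N k f |f. L2_norm_ms e r N k f = 1 \<and> L2_inner e r N k f (\<lambda>_. 1) = 0}"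
    then obtain f where "y = ereal (dirichlet e r N k f)" "L2_norm_ms e r N k f = 1" "L2_inner e r N k f (\<lambda>_. 1) = 0"
      by blast
    then show "ereal c0 * G \<le> y" using key by simp
  qed
  then show ?thesis unfolding G_def c0_def .
qed


end
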